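(* Under Assumptions (A1), (A2) and (A4) of the context, for every $\zeta>0$ there exist $M\in\mathbb N_+$ and $\lambda>0$ such that $$\|z\|_{\mathrm D(A)}^2+2\lambda\|\mathfrak d(z)\|^2_{\mathbb R^{M_\sigma}}\ge\zeta\|z\|_V^2\qquad\text{for all }z\in\mathrm D(A).$$ Moreover $M$ can be chosen depending only on $\zeta$ (nondecreasingly), and $\lambda$ depending only on $\zeta$ and $\varpi_M$ (nondecreasingly), where $\varpi_M>0$ is a constant such that $\|\Psi^\diamond v\|^2_{\mathrm D(A)}\le\varpi_M\|\Psi^\diamond v\|_V^2$ and $\|\Psi^\diamond v\|_V^2\le\varpi_M\|v\|^2_{\mathbb R^{M_\sigma}}$ for all $v\in\mathbb R^{M_\sigma}$.
   Context: $H$ real Hilbert space identified with its dual, $V\subseteq H$ real Hilbert space. (A1) $A\in\mathcal L(V,V')$ symmetric with $(y,z)\mapsto\langle Ay,z\rangle_{V',V}$ a complete scalar product on $V$; $V$ carries the scalar product $(y,z)_V:=\langle Ay,z\rangle_{V',V}$. (A2) $V\subseteq H$ is dense, continuous, compact. $\mathrm D(A):=\{h\in H\mid Ah\in H\}$ with norm $\|z\|_{\mathrm D(A)}:=\|Az\|_H$; $\mathrm D(A)'$ its dual, pairing $\langle\cdot,\cdot\rangle$. (A4) $\sigma:\mathbb N_+\to\mathbb N_+$ strictly increasing, $M_\sigma:=\sigma(M)$; for each $M$, linearly independent actuators $\mathfrak d^{M,j}\in\mathrm D(A)'$, $1\le j\le M_\sigma$, and linearly independent $\Psi^{M,j}\in\mathrm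 D(A)$, $1\le j\le M_\sigma$, with $\langle\mathfrak d^{M,j},\Psi^{M,i}\rangle=\delta_{ij}$; with $\mathrm D_M:=\{z\in\mathrm D(A)\mid\langle\mathfrak d^{M,j},z\rangle=0\ \forall j\}$, the constant $\xi_{M_+}:=\inf_{\Theta\in\mathrm D_M\setminus\{0\}}\|\Theta\|^2_{\mathrm D(A)}/\|\Theta\|_V^2$ satisfies $\xi_{M_+}\to+\infty$ as $M\to\infty$. Notation: $\mathfrak d(z):=(\langle\mathfrak d^{M,1},z\rangle,\dots,\langle\mathfrak d^{M,M_\sigma},z\rangle)\in\mathbb R^{M_\sigma}$ for $z\in\mathrm D(A)$, and $\Psi^\diamond v:=\sum_{j=1}^{M_\sigma}v_j\Psi^{M,j}$ for $v\in\mathbb R^{M_\sigma}$. *)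

theory Defs
  imports "HOL-Analysis.Analysis"
begin

text \<open>H is a real Hilbert space (type 'a). V is a linear subspace of H;
 the operator A in L(V,V') is encoded by its bilinear form a y z = <A y, z>_{V',V}, which is
 the scalar product of V. D(A) = {h in H | A h in H}: those h in V for which the functional
 a h . is represented by an element f of H, i.e. a h v = (f, v)_H for all v in V; then A h = f.\<close>

definition DA :: "'a::real_inner set \<Rightarrow> ('a \<Rightarrow> 'a \<Rightarrow> real) \<Rightarrow> 'a set" where
  "DA V a = {h \<in> V. \<exists>f. \<forall>v\<in>V. a h v = inner f v}"

definition Aop :: "'a::real_inner set \<Rightarrow> ('a \<Rightarrow> 'a \<Rightarrow> real) \<Rightarrow> 'a \<Rightarrow> 'a" where
  "Aop V a h = (THE f. \<forall>v\<in>V. a h v = inner f v)"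

text \<open>norm on D(A): norm (A z) in H; squared V-norm: a z z.\<close>

text \<open>Actuators: d M j z = <d^{M,j}, z>; Psi M j = Psi^{M,j}; sigma M = M_sigma.\<close>

definition DM :: "'a::real_inner set \<Rightarrow> ('a \<Rightarrow> 'a \<Rightarrow> real) \<Rightarrow> (nat \<Rightarrow> nat \<Rightarrow> 'a \<Rightarrow> real)
    \<Rightarrow> (nat \<Rightarrow> nat) \<Rightarrow> nat \<Rightarrow> 'a set" where
  "DM V a d \<sigma> M = {z \<in> DA V a. \<forall>j\<in>{1..\<sigma> M}. d M j z = 0}"

text \<open>xi_{M+} as an extended real infimum (infimum of the empty set is +infinity).\<close>
definition xiM :: "'a::real_inner set \<Rightarrow> ('a \<Rightarrow> 'a \<Rightarrow> real) \<Rightarrow> (nat \<Rightarrow> nat \<Rightarrow> 'a \<Rightarrow> real)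
    \<Rightarrow> (nat \<Rightarrow> nat) \<Rightarrow> nat \<Rightarrow> ereal" where
  "xiM V a d \<sigma> M = Inf {ereal ((norm (Aop V a \<Theta>))\<^sup>2 / a \<Theta> \<Theta>) | \<Theta>. \<Theta> \<in> DM V a d \<sigma> M \<and> \<Theta> \<noteq> 0}"

definition Psi_dia :: "(nat \<Rightarrow> nat \<Rightarrow> 'a::real_vector) \<Rightarrow> (nat \<Rightarrow> nat) \<Rightarrow> nat \<Rightarrow> (nat \<Rightarrow> real) \<Rightarrow> 'a" where
  "Psi_dia \<Psi> \<sigma> M v = (\<Sum>j=1..\<sigma> M. v j *\<^sub>R \<Psi> M j)"

definition dnorm2 :: "(nat \<Rightarrow> nat \<Rightarrow> 'a \<Rightarrow> real) \<Rightarrow> (nat \<Rightarrow> nat) \<Rightarrow> nat \<Rightarrow> 'a \<Rightarrow> real" where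
  "dnorm2 d \<sigma> M z = (\<Sum>j=1..\<sigma> M. (d M j z)\<^sup>2)"

definition varpi_ok :: "'a::real_inner set \<Rightarrow> ('a \<Rightarrow> 'a \<Rightarrow> real) \<Rightarrow> (nat \<Rightarrow> nat \<Rightarrow> 'a)
    \<Rightarrow> (nat \<Rightarrow> nat) \<Rightarrow> nat \<Rightarrow> real \<Rightarrow> bool" where
  "varpi_ok V a \<Psi> \<sigma> M w \<longleftrightarrow> w > 0 \<and>
     (\<forall>v. (norm (Aop V a (Psi_dia \<Psi> \<sigma> M v)))\<^sup>2
            \<le> w * a (Psi_dia \<Psi> \<sigma> M v) (Psi_dia \<Psi> \<sigma> M v)
        \<and> a (Psi_dia \<Psi> \<sigma> M v) (Psi_dia \<Psi> \<sigma> M v) \<le> w * (\<Sum>j=1..\<sigma> M. (v j)\<^sup>2))"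

end

theory Submission
  imports Defs "HOL-Analysis.Analysis"
begin


lemma norm_sum_sq_bound:
  fixes w :: "nat \<Rightarrow> 'b::real_normed_vector"
  shows "(norm (\<Sum>j\<in>F. v j *\<^sub>R w j))\<^sup>2 \<le> (\<Sum>j\<in>F. (norm (w j))\<^sup>2) * (\<Sum>j\<in>F. (v j)\<^sup>2)"
proof -
  have "norm (\<Sum>j\<in>F. v j *\<^sub>R w j) \<le> (\<Sum>j\<in>F. \<bar>v j\<bar> * norm (w j))"
    by (rule order_trans[OF norm_sum]) simp
  hence "(norm (\<Sum>j\<in>F. v j *\<^sub>R w j))\<^sup>2 \<le> (\<Sum>j\<in>F. \<bar>v j\<bar> * norm (w j))\<^sup>2"
    by (intro power_mono) auto
  also have "\<dots> \<le> (\<Sum>j\<in>F. \<bar>v j\<bar>\<^sup>2) * (\<Sum>j\<in>F. (norm (w j))\<^sup>2)"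
    by (rule Cauchy_Schwarz_ineq_sum)
  finally show ?thesis by (simp add: mult.commute)
qed

lemma orth_dense_zero:
  fixes f :: "'a::real_inner"
  assumes "closure V = UNIV" "\<forall>v\<in>V. inner f v = 0"
  shows "f = 0"
proof -
  have c: "closed {v. inner f v = 0}"
    by (intro closed_Collect_eq continuous_on_inner continuous_on_const continuous_on_id)
  moreover have "V \<subseteq> {v. inner f v = 0}" using assms(2) by auto
  ultimately have "closure V \<subseteq> {v. inner f v = 0}" using closure_minimal by blast
  hence "inner f f = 0" using assms(1) by blast
  thus ?thesis by simp
qed

locale setting =
  fixes V :: "'a::real_inner set" and a :: "'a \<Rightarrow> 'a \<Rightarrow> real"
    and \<sigma> :: "nat \<Rightarrow> nat" and d :: "nat \<Rightarrow> nat \<Rightarrow> 'a \<Rightarrow> real" and \<Psi> :: "nat \<Rightarrow> nat \<Rightarrow> 'a"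
  assumes V_sub: "subspace V"
    and a_add: "\<And>x y z. x \<in> V \<Longrightarrow> y \<in> V \<Longrightarrow> z \<in> V \<Longrightarrow> a (x + y) z = a x z + a y z"
    and a_scale: "\<And>c x z. x \<in> V \<Longrightarrow> z \<in> V \<Longrightarrow> a (c *\<^sub>R x) z = c * a x z"
    and a_sym: "\<And>x y. x \<in> V \<Longrightarrow> y \<in> V \<Longrightarrow> a x y = a y x"
    and a_pos: "\<And>x. x \<in> V \<Longrightarrow> x \<noteq> 0 \<Longrightarrow> a x x > 0"
    and V_dense: "closure V = UNIV"
    and d_add: "\<And>M j y z. M \<ge> 1 \<Longrightarrow> j \<in> {1..\<sigma> M} \<Longrightarrow> y \<in> DA V a \<Longrightarrow> z \<in> DA V a \<Longrightarrow>
        d M j (y + z) = d M j y + d M j z"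
    and d_scale: "\<And>M j c z. M \<ge> 1 \<Longrightarrow> j \<in> {1..\<sigma> M} \<Longrightarrow> z \<in> DA V a \<Longrightarrow>
        d M j (c *\<^sub>R z) = c * d M j z"
    and \<Psi>_in: "\<And>M j. M \<ge> 1 \<Longrightarrow> j \<in> {1..\<sigma> M} \<Longrightarrow> \<Psi> M j \<in> DA V a"
    and biorth: "\<And>M i j. M \<ge> 1 \<Longrightarrow> i \<in> {1..\<sigma> M} \<Longrightarrow> j \<in> {1..\<sigma> M} \<Longrightarrow>
        d M j (\<Psi> M i) = (if i = j then 1 else 0)"
begin

lemma DA_V: "h \<in> DA V a \<Longrightarrow> h \<in> V" by (simp add: DA_def)

lemma Aop_rep: assumes "h \<in> DA V a" shows "\<forall>v\<in>V. a h v = inner (Aop V a h) v"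
proof -
  obtain f where f: "\<forall>v\<in>V. a h v = inner f v" using assms by (auto simp: DA_def)
  have "\<exists>!f. \<forall>v\<in>V. a h v = inner f v"
  proof (rule ex1I[of _ f])
    fix g assume g: "\<forall>v\<in>V. a h v = inner g v"
    have "\<forall>v\<in>V. inner (g - f) v = 0" using f g by (simp add: inner_diff_left)
    thus "g = f" using orth_dense_zero[OF V_dense] by fastforce
  qed (rule f)
  thus ?thesis unfolding Aop_def by (rule theI')
qed

lemma Aop_eq: assumes "h \<in> V" "\<forall>v\<in>V. a h v = inner f v" shows "h \<in> DA V a" "Aop V a h = f"
proof -
  show h: "h \<in> DA V a" using assms by (auto simp: DA_def)
  have "\<forall>v\<in>V. inner (Aop V a h - f) v = 0" using Aop_rep[OF h] assms(2) by (simp add: inner_diff_left)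
  thus "Aop V a h = f" using orth_dense_zero[OF V_dense] by fastforce
qed

lemma DA_add: assumes "x \<in> DA V a" "y \<in> DA V a"
  shows "x + y \<in> DA V a" "Aop V a (x + y) = Aop V a x + Aop V a y"
proof -
  have V: "x + y \<in> V" using assms DA_V V_sub by (simp add: subspace_add)
  have "\<forall>v\<in>V. a (x + y) v = inner (Aop V a x + Aop V a y) v"
    using Aop_rep[OF assms(1)] Aop_rep[OF assms(2)] a_add DA_V assms by (simp add: inner_add_left)
  from Aop_eq[OF V this] show "x + y \<in> DA V a" "Aop V a (x + y) = Aop V a x + Aop V a y" by auto
qed

lemma DA_scale: assumes "x \<in> DA V a"
  shows "c *\<^sub>R x \<in> DA V a" "Aop V a (c *\<^sub>R x) = c *\<^sub>R Aop V a x"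
proof -
  have V: "c *\<^sub>R x \<in> V" using assms DA_V V_sub by (simp add: subspace_scale)
  have "\<forall>v\<in>V. a (c *\<^sub>R x) v = inner (c *\<^sub>R Aop V a x) v"
    using Aop_rep[OF assms(1)] a_scale DA_V assms by simp
  from Aop_eq[OF V this] show "c *\<^sub>R x \<in> DA V a" "Aop V a (c *\<^sub>R x) = c *\<^sub>R Aop V a x" by auto
qed

lemma zero_V: "0 \<in> V" using V_sub by (simp add: subspace_0)

lemma a_zero: "z \<in> V \<Longrightarrow> a 0 z = 0"
  using a_scale[where c=0 and x=0 and z=z] zero_V by simp

lemma a_nonneg: "x \<in> V \<Longrightarrow> a x x \<ge> 0"
  using a_pos[of x] a_zero[of 0] by (cases "x = 0") auto

lemma a_par: assumes "x \<in> V" "y \<in> V"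
  shows "a (x + y) (x + y) \<le> 2 * a x x + 2 * a y y"
proof -
  have my: "(-1) *\<^sub>R y \<in> V" and xy: "x + y \<in> V" and xmy: "x + (-1) *\<^sub>R y \<in> V"
    using subspace_scale[OF V_sub assms(2), of "-1"] subspace_add[OF V_sub assms]
      subspace_add[OF V_sub assms(1) subspace_scale[OF V_sub assms(2), of "-1"]] by auto
  have e1: "a (x + y) (x + y) = a x x + 2 * a x y + a y y"
    using a_add[OF assms xy] a_sym[OF xy assms(1)] a_sym[OF xy assms(2)]
      a_add[OF assms assms(1)] a_add[OF assms assms(2)] a_sym[OF assms] by simp
  have e2: "a (x + (-1) *\<^sub>R y) (x + (-1) *\<^sub>R y) = a x x - 2 * a x y + a y y"
  proof -
    have "a (x + (-1) *\<^sub>R y) (x + (-1) *\<^sub>R y) = a x (x + (-1) *\<^sub>R y) - a y (x + (-1) *\<^sub>R y)"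
      using a_add[OF assms(1) my xmy] a_scale[OF assms(2) xmy, of "-1"] by simp
    also have "\<dots> = a (x + (-1) *\<^sub>R y) x - a (x + (-1) *\<^sub>R y) y"
      using a_sym[OF xmy assms(1)] a_sym[OF xmy assms(2)] by simp
    also have "\<dots> = a x x - a y x - (a x y - a y y)"
      using a_add[OF assms(1) my assms(1)] a_add[OF assms(1) my assms(2)]
        a_scale[OF assms(2) assms(1), of "-1"] a_scale[OF assms(2) assms(2), of "-1"] by simp
    finally show ?thesis using a_sym[OF assms] by simp
  qed
  have "a (x + (-1) *\<^sub>R y) (x + (-1) *\<^sub>R y) \<ge> 0" by (rule a_nonneg[OF xmy])
  thus ?thesis using e1 e2 by simp
qed

lemma sum_DA: assumes "M \<ge> 1"
  shows "finite F \<Longrightarrow> F \<subseteq> {1..\<sigma> M} \<Longrightarrow> (\<Sum>j\<in>F. v j *\<^sub>R \<Psi> M j) \<in> DA V a \<and>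
         Aop V a (\<Sum>j\<in>F. v j *\<^sub>R \<Psi> M j) = (\<Sum>j\<in>F. v j *\<^sub>R Aop V a (\<Psi> M j)) \<and>
         (\<forall>i\<in>{1..\<sigma> M}. d M i (\<Sum>j\<in>F. v j *\<^sub>R \<Psi> M j) = (\<Sum>j\<in>F. v j * d M i (\<Psi> M j)))"
proof (induction F rule: finite_induct)
  case empty
  have "(0::'a) \<in> DA V a" "Aop V a 0 = 0"
    using Aop_eq[of 0 0] zero_V a_zero by auto
  moreover have "\<forall>i\<in>{1..\<sigma> M}. d M i 0 = 0"
    using d_scale[OF assms _ \<open>0 \<in> DA V a\<close>, of _ 0] by simp
  ultimately show ?case by simp
next
  case (insert x F)
  hence IH: "(\<Sum>j\<in>F. v j *\<^sub>R \<Psi> M j) \<in> DA V a"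
     "Aop V a (\<Sum>j\<in>F. v j *\<^sub>R \<Psi> M j) = (\<Sum>j\<in>F. v j *\<^sub>R Aop V a (\<Psi> M j))"
     "\<forall>i\<in>{1..\<sigma> M}. d M i (\<Sum>j\<in>F. v j *\<^sub>R \<Psi> M j) = (\<Sum>j\<in>F. v j * d M i (\<Psi> M j))"
    by auto
  have x: "x \<in> {1..\<sigma> M}" using insert by auto
  have px: "v x *\<^sub>R \<Psi> M x \<in> DA V a" "Aop V a (v x *\<^sub>R \<Psi> M x) = v x *\<^sub>R Aop V a (\<Psi> M x)"
    using DA_scale[OF \<Psi>_in[OF assms x]] by auto
  show ?case using insert(1,2) IH px DA_add[OF px(1) IH(1)]
      d_add[OF assms _ px(1) IH(1)] d_scale[OF assms _ \<Psi>_in[OF assms x]] by simp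
qed

lemma Psi_dia_props: assumes "M \<ge> 1"
  shows "Psi_dia \<Psi> \<sigma> M v \<in> DA V a"
    "Aop V a (Psi_dia \<Psi> \<sigma> M v) = (\<Sum>j=1..\<sigma> M. v j *\<^sub>R Aop V a (\<Psi> M j))"
    "\<And>i. i \<in> {1..\<sigma> M} \<Longrightarrow> d M i (Psi_dia \<Psi> \<sigma> M v) = v i"
proof -
  note S = sum_DA[OF assms finite_atLeastAtMost order_refl, where v=v]
  show "Psi_dia \<Psi> \<sigma> M v \<in> DA V a"
    "Aop V a (Psi_dia \<Psi> \<sigma> M v) = (\<Sum>j=1..\<sigma> M. v j *\<^sub>R Aop V a (\<Psi> M j))"
    using S by (auto simp: Psi_dia_def)
  fix i assume i: "i \<in> {1..\<sigma> M}"
  have "d M i (Psi_dia \<Psi> \<sigma> M v) = (\<Sum>j=1..\<sigma> M. v j * (if j = i then 1 else 0))"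
    using S i biorth[OF assms _ i] by (simp add: Psi_dia_def)
  also have "\<dots> = v i" using i by (simp add: if_distrib sum.delta cong: if_cong)
  finally show "d M i (Psi_dia \<Psi> \<sigma> M v) = v i" .
qed

lemma core:
  assumes M: "M \<ge> 1" and \<zeta>: "\<zeta> > 0" and xi: "ereal (4 * \<zeta>) \<le> xiM V a d \<sigma> M"
    and C2: "\<And>v. (norm (Aop V a (Psi_dia \<Psi> \<sigma> M v)))\<^sup>2 \<le> C2 * (\<Sum>j=1..\<sigma> M. (v j)\<^sup>2)"
    and C1: "\<And>v. a (Psi_dia \<Psi> \<sigma> M v) (Psi_dia \<Psi> \<sigma> M v) \<le> C1 * (\<Sum>j=1..\<sigma> M. (v j)\<^sup>2)"
    and z: "z \<in> DA V a"
  shows "\<zeta> * a z z \<le> (norm (Aop V a z))\<^sup>2 + (C2 + 2 * \<zeta> * C1) * dnorm2 d \<sigma> M z"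
proof -
  define v where "v = (\<lambda>j. d M j z)"
  define P where "P = Psi_dia \<Psi> \<sigma> M v"
  define \<theta> where "\<theta> = z + (-1) *\<^sub>R P"
  define S where "S = (\<Sum>j=1..\<sigma> M. (v j)\<^sup>2)"
  have S: "dnorm2 d \<sigma> M z = S" by (simp add: dnorm2_def S_def v_def)
  have P: "P \<in> DA V a" using Psi_dia_props[OF M] by (simp add: P_def)
  have mP: "(-1) *\<^sub>R P \<in> DA V a" "Aop V a ((-1) *\<^sub>R P) = - Aop V a P"
    using DA_scale[OF P, of "-1"] by auto
  have th: "\<theta> \<in> DA V a" and Ath: "Aop V a \<theta> = Aop V a z - Aop V a P"
    using DA_add[OF z mP(1)] mP(2) by (auto simp: \<theta>_def)
  have dth: "\<forall>j\<in>{1..\<sigma> M}. d M j \<theta> = 0"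
  proof
    fix j assume j: "j \<in> {1..\<sigma> M}"
    have "d M j \<theta> = d M j z + (-1) * d M j P"
      unfolding \<theta>_def using d_add[OF M j z mP(1)] d_scale[OF M j P, of "-1"] by simp
    also have "d M j P = v j" using Psi_dia_props(3)[OF M j] by (simp add: P_def)
    finally show "d M j \<theta> = 0" by (simp add: v_def)
  qed
  have zeq: "z = \<theta> + P" by (simp add: \<theta>_def)
  have key: "4 * \<zeta> * a \<theta> \<theta> \<le> (norm (Aop V a \<theta>))\<^sup>2"
  proof (cases "\<theta> = 0")
    case True
    have "Aop V a 0 = 0" using Aop_eq[of 0 0] zero_V a_zero by auto
    thus ?thesis using True a_zero zero_V by simp
  next
    case False
    have pos: "a \<theta> \<theta> > 0" using a_pos[OF DA_V[OF th] False] .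
    have "\<theta> \<in> DM V a d \<sigma> M" using th dth by (simp add: DM_def)
    hence "xiM V a d \<sigma> M \<le> ereal ((norm (Aop V a \<theta>))\<^sup>2 / a \<theta> \<theta>)"
      unfolding xiM_def using False by (intro Inf_lower) blast
    with xi have "ereal (4 * \<zeta>) \<le> ereal ((norm (Aop V a \<theta>))\<^sup>2 / a \<theta> \<theta>)"
      by (rule order_trans)
    hence "4 * \<zeta> \<le> (norm (Aop V a \<theta>))\<^sup>2 / a \<theta> \<theta>" by simp
    thus ?thesis using pos by (simp add: le_divide_eq)
  qed
  have par: "a z z \<le> 2 * a \<theta> \<theta> + 2 * a P P"
    using a_par[OF DA_V[OF th] DA_V[OF P]] zeq by simp
  have n2: "(norm (Aop V a \<theta>))\<^sup>2 \<le> 2 * (norm (Aop V a z))\<^sup>2 + 2 * (norm (Aop V a P))\<^sup>2"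
  proof -
    have "norm (Aop V a \<theta>) \<le> norm (Aop V a z) + norm (Aop V a P)"
      unfolding Ath by (rule norm_triangle_ineq4)
    hence "(norm (Aop V a \<theta>))\<^sup>2 \<le> (norm (Aop V a z) + norm (Aop V a P))\<^sup>2"
      by (intro power_mono) auto
    also have "\<dots> \<le> 2 * (norm (Aop V a z))\<^sup>2 + 2 * (norm (Aop V a P))\<^sup>2"
      using sum_squares_bound[of "norm (Aop V a z)" "norm (Aop V a P)"]
      by (simp add: power2_sum)
    finally show ?thesis .
  qed
  have c2: "(norm (Aop V a P))\<^sup>2 \<le> C2 * S" using C2 by (simp add: P_def S_def)
  have c1: "a P P \<le> C1 * S" using C1 by (simp add: P_def S_def)
  have "\<zeta> * a z z \<le> \<zeta> * (2 * a \<theta> \<theta> + 2 * a P P)"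
    using par \<zeta> by (simp add: mult_left_mono)
  also have "\<dots> = 2 * (\<zeta> * a \<theta> \<theta>) + 2 * (\<zeta> * a P P)" by (simp add: algebra_simps)
  also have "\<dots> \<le> (norm (Aop V a z))\<^sup>2 + C2 * S + 2 * (\<zeta> * (C1 * S))"
  proof -
    have k: "4 * (\<zeta> * a \<theta> \<theta>) \<le> (norm (Aop V a \<theta>))\<^sup>2" using key by (simp add: mult.assoc)
    have h: "\<zeta> * a P P \<le> \<zeta> * (C1 * S)" using c1 \<zeta> by (intro mult_left_mono) auto
    show ?thesis using k h n2 c2 by linarith
  qed
  finally show ?thesis using S by (simp add: algebra_simps)
qed

end

theorem lemma3p4:
  fixes V :: "'a::{real_inner,complete_space} set"
    and a :: "'a \<Rightarrow> 'a \<Rightarrow> real"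
    and \<sigma> :: "nat \<Rightarrow> nat"
    and d :: "nat \<Rightarrow> nat \<Rightarrow> 'a \<Rightarrow> real"
    and \<Psi> :: "nat \<Rightarrow> nat \<Rightarrow> 'a"
  assumes V_sub: "subspace V"
    \<comment> \<open>(A1): a is a symmetric bilinear positive definite form on V, complete\<close>
    and a_add: "\<And>x y z. x \<in> V \<Longrightarrow> y \<in> V \<Longrightarrow> z \<in> V \<Longrightarrow> a (x + y) z = a x z + a y z"
    and a_scale: "\<And>c x z. x \<in> V \<Longrightarrow> z \<in> V \<Longrightarrow> a (c *\<^sub>R x) z = c * a x z"
    and a_sym: "\<And>x y. x \<in> V \<Longrightarrow> y \<in> V \<Longrightarrow> a x y = a y x"
    and a_pos: "\<And>x. x \<in> V \<Longrightarrow> x \<noteq> 0 \<Longrightarrow> a x x > 0"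
    and a_complete: "\<And>s. (\<forall>n. s n \<in> V) \<Longrightarrow>
        (\<forall>e>0. \<exists>N. \<forall>m\<ge>N. \<forall>n\<ge>N. sqrt (a (s m - s n) (s m - s n)) < e) \<Longrightarrow>
        \<exists>l\<in>V. (\<lambda>n. sqrt (a (s n - l) (s n - l))) \<longlonglongrightarrow> 0"
    \<comment> \<open>(A2): dense, continuous, compact embedding\<close>
    and V_dense: "closure V = UNIV"
    and V_cont: "\<exists>C. \<forall>v\<in>V. (norm v)\<^sup>2 \<le> C * a v v"
    and V_compact: "\<And>s :: nat \<Rightarrow> 'a. (\<forall>n. s n \<in> V) \<Longrightarrow> (\<exists>B. \<forall>n. a (s n) (s n) \<le> B) \<Longrightarrow>
        \<exists>r. strict_mono r \<and> convergent (s \<circ> r)"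
    \<comment> \<open>(A4)\<close>
    and \<sigma>_mono: "strict_mono_on {1..} \<sigma>"
    and \<sigma>_pos: "\<And>M. M \<ge> 1 \<Longrightarrow> \<sigma> M \<ge> 1"
    and d_add: "\<And>M j y z. M \<ge> 1 \<Longrightarrow> j \<in> {1..\<sigma> M} \<Longrightarrow> y \<in> DA V a \<Longrightarrow> z \<in> DA V a \<Longrightarrow>
        d M j (y + z) = d M j y + d M j z"
    and d_scale: "\<And>M j c z. M \<ge> 1 \<Longrightarrow> j \<in> {1..\<sigma> M} \<Longrightarrow> z \<in> DA V a \<Longrightarrow>
        d M j (c *\<^sub>R z) = c * d M j z"
    and d_bounded: "\<And>M j. M \<ge> 1 \<Longrightarrow> j \<in> {1..\<sigma> M} \<Longrightarrow>
        \<exists>C. \<forall>z\<in>DA V a. \<bar>d M j z\<bar> \<le> C * norm (Aop V a z)"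
    and d_indep: "\<And>M c. M \<ge> 1 \<Longrightarrow> (\<forall>z\<in>DA V a. (\<Sum>j=1..\<sigma> M. c j * d M j z) = 0) \<Longrightarrow>
        \<forall>j\<in>{1..\<sigma> M}. c j = 0"
    and \<Psi>_in: "\<And>M j. M \<ge> 1 \<Longrightarrow> j \<in> {1..\<sigma> M} \<Longrightarrow> \<Psi> M j \<in> DA V a"
    and \<Psi>_indep: "\<And>M c. M \<ge> 1 \<Longrightarrow> (\<Sum>j=1..\<sigma> M. c j *\<^sub>R \<Psi> M j) = 0 \<Longrightarrow>
        \<forall>j\<in>{1..\<sigma> M}. c j = 0"
    and biorth: "\<And>M i j. M \<ge> 1 \<Longrightarrow> i \<in> {1..\<sigma> M} \<Longrightarrow> j \<in> {1..\<sigma> M} \<Longrightarrow>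
        d M j (\<Psi> M i) = (if i = j then 1 else 0)"
    and xi_lim: "((\<lambda>M. xiM V a d \<sigma> M) \<longlongrightarrow> \<infinity>) sequentially"
  shows "(\<forall>\<zeta>>0. \<exists>M\<ge>1. \<exists>lam>0. \<forall>z\<in>DA V a.
            (norm (Aop V a z))\<^sup>2 + 2 * lam * dnorm2 d \<sigma> M z \<ge> \<zeta> * a z z)
       \<and> (\<exists>Mf :: real \<Rightarrow> nat. \<exists>\<Lambda> :: real \<Rightarrow> real \<Rightarrow> real.
            mono_on {0<..} Mf \<and> (\<forall>\<zeta>>0. Mf \<zeta> \<ge> 1)
          \<and> (\<forall>\<zeta>>0. \<forall>\<omega>>0. \<Lambda> \<zeta> \<omega> > 0)
          \<and> (\<forall>\<zeta>1 \<zeta>2 \<omega>1 \<omega>2. 0 < \<zeta>1 \<and> \<zeta>1 \<le> \<zeta>2 \<and> 0 < \<omega>1 \<and> \<omega>1 \<le> \<omega>2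
                \<longrightarrow> \<Lambda> \<zeta>1 \<omega>1 \<le> \<Lambda> \<zeta>2 \<omega>2)
          \<and> (\<forall>\<zeta>>0. \<forall>\<omega>. varpi_ok V a \<Psi> \<sigma> (Mf \<zeta>) \<omega> \<longrightarrow>
               (\<forall>z\<in>DA V a. (norm (Aop V a z))\<^sup>2 + 2 * \<Lambda> \<zeta> \<omega> * dnorm2 d \<sigma> (Mf \<zeta>) z
                             \<ge> \<zeta> * a z z)))"
  proof -
  interpret S: setting V a \<sigma> d \<Psi>
    using V_sub a_add a_scale a_sym a_pos V_dense d_add d_scale \<Psi>_in biorth
    by unfold_locales auto
  define P where "P \<zeta> M \<longleftrightarrow> M \<ge> 1 \<and> (\<forall>M'\<ge>M. ereal (4 * \<zeta>) \<le> xiM V a d \<sigma> M')" for \<zeta> :: real and M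
  have ex: "\<exists>M. P \<zeta> M" for \<zeta>
  proof -
    have "eventually (\<lambda>M. xiM V a d \<sigma> M > ereal (4 * \<zeta>)) sequentially"
      using xi_lim by (simp add: tendsto_PInfty)
    then obtain N where N: "\<And>M. M \<ge> N \<Longrightarrow> xiM V a d \<sigma> M > ereal (4 * \<zeta>)"
      by (auto simp: eventually_sequentially)
    show ?thesis
      by (rule exI[of _ "max N 1"]) (auto simp: P_def intro: less_imp_le N)
  qed
  define Mf where "Mf \<zeta> = (LEAST M. P \<zeta> M)" for \<zeta>
  have MfP: "P \<zeta> (Mf \<zeta>)" for \<zeta> unfolding Mf_def using ex by (rule LeastI_ex)
  have Mf1: "Mf \<zeta> \<ge> 1" and Mfxi: "ereal (4 * \<zeta>) \<le> xiM V a d \<sigma> (Mf \<zeta>)" for \<zeta>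
    using MfP[of \<zeta>] by (auto simp: P_def)
  have Mf_mono: "mono_on {0<..} Mf"
  proof (rule mono_onI)
    fix r s :: real assume "r \<le> s"
    hence "P r (Mf s)" using MfP[of s] unfolding P_def
      by (meson ereal_less_eq(3) mult_left_mono order_trans zero_le_numeral)
    thus "Mf r \<le> Mf s" unfolding Mf_def by (rule Least_le)
  qed
  define \<Lambda> where "\<Lambda> \<zeta> \<omega> = (\<omega>\<^sup>2 + 2 * \<zeta> * \<omega>) / 2" for \<zeta> \<omega> :: real
  have part2: "\<forall>\<zeta>>0. \<forall>\<omega>. varpi_ok V a \<Psi> \<sigma> (Mf \<zeta>) \<omega> \<longrightarrow>
               (\<forall>z\<in>DA V a. (norm (Aop V a z))\<^sup>2 + 2 * \<Lambda> \<zeta> \<omega> * dnorm2 d \<sigma> (Mf \<zeta>) z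
                             \<ge> \<zeta> * a z z)"
  proof (intro allI impI ballI)
    fix \<zeta> \<omega> :: real and z assume \<zeta>: "\<zeta> > 0" and w: "varpi_ok V a \<Psi> \<sigma> (Mf \<zeta>) \<omega>" and z: "z \<in> DA V a"
    have w0: "\<omega> > 0" using w by (simp add: varpi_ok_def)
    have C1: "a (Psi_dia \<Psi> \<sigma> (Mf \<zeta>) v) (Psi_dia \<Psi> \<sigma> (Mf \<zeta>) v) \<le> \<omega> * (\<Sum>j=1..\<sigma> (Mf \<zeta>). (v j)\<^sup>2)" for v
      using w by (simp add: varpi_ok_def)
    have C2: "(norm (Aop V a (Psi_dia \<Psi> \<sigma> (Mf \<zeta>) v)))\<^sup>2 \<le> \<omega>\<^sup>2 * (\<Sum>j=1..\<sigma> (Mf \<zeta>). (v j)\<^sup>2)" for v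
    proof -
      have "(norm (Aop V a (Psi_dia \<Psi> \<sigma> (Mf \<zeta>) v)))\<^sup>2 \<le> \<omega> * a (Psi_dia \<Psi> \<sigma> (Mf \<zeta>) v) (Psi_dia \<Psi> \<sigma> (Mf \<zeta>) v)"
        using w by (simp add: varpi_ok_def)
      also have "\<dots> \<le> \<omega> * (\<omega> * (\<Sum>j=1..\<sigma> (Mf \<zeta>). (v j)\<^sup>2))"
        using C1 w0 by (intro mult_left_mono) auto
      finally show ?thesis by (simp add: power2_eq_square mult.assoc)
    qed
    have L2: "2 * \<Lambda> \<zeta> \<omega> = \<omega>\<^sup>2 + 2 * \<zeta> * \<omega>" by (simp add: \<Lambda>_def)
    from S.core[OF Mf1 \<zeta> Mfxi C2 C1 z]
    show "(norm (Aop V a z))\<^sup>2 + 2 * \<Lambda> \<zeta> \<omega> * dnorm2 d \<sigma> (Mf \<zeta>) z \<ge> \<zeta> * a z z"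
      unfolding L2 by simp
  qed
  have Lpos: "\<forall>\<zeta>>0. \<forall>\<omega>>0. \<Lambda> \<zeta> \<omega> > 0" by (auto simp: \<Lambda>_def intro!: add_pos_pos)
  have Lmono: "\<forall>\<zeta>1 \<zeta>2 \<omega>1 \<omega>2. 0 < \<zeta>1 \<and> \<zeta>1 \<le> \<zeta>2 \<and> 0 < \<omega>1 \<and> \<omega>1 \<le> \<omega>2
                \<longrightarrow> \<Lambda> \<zeta>1 \<omega>1 \<le> \<Lambda> \<zeta>2 \<omega>2"
  proof (intro allI impI)
    fix \<zeta>1 \<zeta>2 \<omega>1 \<omega>2 :: real assume h: "0 < \<zeta>1 \<and> \<zeta>1 \<le> \<zeta>2 \<and> 0 < \<omega>1 \<and> \<omega>1 \<le> \<omega>2"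
    have "\<omega>1\<^sup>2 \<le> \<omega>2\<^sup>2" using h by (intro power_mono) auto
    moreover have "\<zeta>1 * \<omega>1 \<le> \<zeta>2 * \<omega>2" using h by (intro mult_mono) auto
    ultimately show "\<Lambda> \<zeta>1 \<omega>1 \<le> \<Lambda> \<zeta>2 \<omega>2" by (simp add: \<Lambda>_def)
  qed
  have part1: "\<forall>\<zeta>>0. \<exists>M\<ge>1. \<exists>lam>0. \<forall>z\<in>DA V a.
            (norm (Aop V a z))\<^sup>2 + 2 * lam * dnorm2 d \<sigma> M z \<ge> \<zeta> * a z z"
  proof (intro allI impI)
    fix \<zeta> :: real assume \<zeta>: "\<zeta> > 0"
    define M where "M = Mf \<zeta>"
    have M: "M \<ge> 1" using Mf1 by (simp add: M_def)
    define C2 where "C2 = (\<Sum>j=1..\<sigma> M. (norm (Aop V a (\<Psi> M j)))\<^sup>2)"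
    define C3 where "C3 = (\<Sum>j=1..\<sigma> M. (norm (\<Psi> M j))\<^sup>2)"
    define C1 where "C1 = (C2 + C3) / 2"
    have C2: "(norm (Aop V a (Psi_dia \<Psi> \<sigma> M v)))\<^sup>2 \<le> C2 * (\<Sum>j=1..\<sigma> M. (v j)\<^sup>2)" for v
      unfolding S.Psi_dia_props(2)[OF M] C2_def by (rule norm_sum_sq_bound)
    have C3: "(norm (Psi_dia \<Psi> \<sigma> M v))\<^sup>2 \<le> C3 * (\<Sum>j=1..\<sigma> M. (v j)\<^sup>2)" for v
      unfolding Psi_dia_def C3_def by (rule norm_sum_sq_bound)
    have C1: "a (Psi_dia \<Psi> \<sigma> M v) (Psi_dia \<Psi> \<sigma> M v) \<le> C1 * (\<Sum>j=1..\<sigma> M. (v j)\<^sup>2)" for v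
    proof -
      let ?P = "Psi_dia \<Psi> \<sigma> M v"
      have PD: "?P \<in> DA V a" by (rule S.Psi_dia_props(1)[OF M])
      have "a ?P ?P = inner (Aop V a ?P) ?P" using S.Aop_rep[OF PD] S.DA_V[OF PD] by auto
      also have "\<dots> \<le> norm (Aop V a ?P) * norm ?P" by (rule norm_cauchy_schwarz)
      also have "\<dots> \<le> ((norm (Aop V a ?P))\<^sup>2 + (norm ?P)\<^sup>2) / 2"
        using sum_squares_bound[of "norm (Aop V a ?P)" "norm ?P"] by simp
      also have "\<dots> \<le> (C2 * (\<Sum>j=1..\<sigma> M. (v j)\<^sup>2) + C3 * (\<Sum>j=1..\<sigma> M. (v j)\<^sup>2)) / 2"
        using C2[of v] C3[of v] by simp
      finally show ?thesis by (simp add: C1_def algebra_simps add_divide_distrib)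
    qed
    have C2nn: "C2 \<ge> 0" "C3 \<ge> 0" by (auto simp: C2_def C3_def intro: sum_nonneg)
    define lam where "lam = (C2 + 2 * \<zeta> * C1) / 2 + 1"
    have "\<zeta> * (C2 + C3) \<ge> 0" using C2nn \<zeta> by simp
    moreover have "lam = (C2 + \<zeta> * (C2 + C3)) / 2 + 1" by (simp add: lam_def C1_def)
    moreover have "(C2 + \<zeta> * (C2 + C3)) / 2 \<ge> 0"
      using C2nn \<open>\<zeta> * (C2 + C3) \<ge> 0\<close> by simp
    ultimately have lam: "lam > 0" by (smt (verit))
    show "\<exists>M\<ge>1. \<exists>lam>0. \<forall>z\<in>DA V a.
            (norm (Aop V a z))\<^sup>2 + 2 * lam * dnorm2 d \<sigma> M z \<ge> \<zeta> * a z z"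
    proof (intro exI[of _ M] conjI M exI[of _ lam] lam ballI)
      fix z assume z: "z \<in> DA V a"
      have core: "\<zeta> * a z z \<le> (norm (Aop V a z))\<^sup>2 + (C2 + 2 * \<zeta> * C1) * dnorm2 d \<sigma> M z"
        using S.core[OF M \<zeta> Mfxi[of \<zeta>, folded M_def] C2 C1 z] .
      have "dnorm2 d \<sigma> M z \<ge> 0" by (simp add: dnorm2_def sum_nonneg)
      thus "(norm (Aop V a z))\<^sup>2 + 2 * lam * dnorm2 d \<sigma> M z \<ge> \<zeta> * a z z"
      proof -
        have "2 * lam * dnorm2 d \<sigma> M z = (C2 + 2 * \<zeta> * C1) * dnorm2 d \<sigma> M z + 2 * dnorm2 d \<sigma> M z"
          unfolding lam_def by (simp add: distrib_left distrib_right)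
        thus ?thesis using core \<open>dnorm2 d \<sigma> M z \<ge> 0\<close> by linarith
      qed
    qed
  qed
  show ?thesis
  proof (rule conjI[OF part1])
    have Mf1': "\<forall>\<zeta>>0. Mf \<zeta> \<ge> 1" using Mf1 by blast
    show "\<exists>Mf :: real \<Rightarrow> nat. \<exists>\<Lambda> :: real \<Rightarrow> real \<Rightarrow> real.
            mono_on {0<..} Mf \<and> (\<forall>\<zeta>>0. Mf \<zeta> \<ge> 1)
          \<and> (\<forall>\<zeta>>0. \<forall>\<omega>>0. \<Lambda> \<zeta> \<omega> > 0)
          \<and> (\<forall>\<zeta>1 \<zeta>2 \<omega>1 \<omega>2. 0 < \<zeta>1 \<and> \<zeta>1 \<le> \<zeta>2 \<and> 0 < \<omega>1 \<and> \<omega>1 \<le> \<omega>2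
                \<longrightarrow> \<Lambda> \<zeta>1 \<omega>1 \<le> \<Lambda> \<zeta>2 \<omega>2)
          \<and> (\<forall>\<zeta>>0. \<forall>\<omega>. varpi_ok V a \<Psi> \<sigma> (Mf \<zeta>) \<omega> \<longrightarrow>
               (\<forall>z\<in>DA V a. (norm (Aop V a z))\<^sup>2 + 2 * \<Lambda> \<zeta> \<omega> * dnorm2 d \<sigma> (Mf \<zeta>) z
                             \<ge> \<zeta> * a z z))"
      by (rule exI[of _ Mf], rule exI[of _ \<Lambda>], intro conjI Mf_mono Mf1' Lpos Lmono part2)
  qed
qed

end
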